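(* Let ${\bf Q}$ be an orthogonal projection on ${\cal H}$, let $s_1,s_2,s_3\in\mathbb{C}$ with $s_1^2+s_2^2+s_3^2=1$ and $s_1\ne0$, let $z\in\mathbb{C}\setminus\{0\}$, and put $\underline z=s_1^2z+s_2^2$, assumed nonzero. On ${\cal H}^3$ let $\underline{\bf Q}$ have block entries $\underline{\bf Q}_{ij}=s_is_j{\bf Q}$ and let $\underline\Gamma=\mathrm{diag}(\Gamma,{\bf I},0)$. Let ${\bf E},{\bf h}\in{\cal H}$ with $\Gamma{\bf E}={\bf E}$, $\Gamma{\bf h}={\bf h}$. Then $$({\bf I}-\Gamma{\bf Q}/z){\bf E}={\bf h}$$ holds if and only if there exists ${\bf E}_1\in{\cal H}$ such that $\underline{\bf E}=({\bf E},{\bf E}_1,0)$ satisfies $$\underline\Gamma({\bf I}-\underline{\bf Q}/\underline z)\underline{\bf E}=({\bf h},0,0);$$ in that case necessarily ${\bf E}_1=s_2{\bf Q}{\bf E}/(s_1z)$. In particular, whenever the corresponding inverses exist on the ranges of $\Gamma$ and $\underline\Gamma$, $[{\bf I}-\Gamma{\bf Q}/z]^{-1}{\bf h}=\underline{\bf G}^\dagger[{\bf I}-\underline\Gamma\underline{\bf Q}/\underline z]^{-1}\underline{\bf G}{\bf h}$, where $\underline{\bf G}{\bf h}=({\bf h},0,0)$ and $\underline{\bf G}^\dagger({\bf a},{\bf b},{\bf c})={\bf a}$.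
   Context: ${\cal H}$ is a complex Hilbert space and $\Gamma$ is an orthogonal projection on ${\cal H}$. ${\cal H}^3$ carries the direct-sum Hilbert structure. *)

theory Defs
  imports Complex_Main "HOL-Library.Product_Plus"
begin

text \<open>Complex Hilbert spaces are not in the distribution; we axiomatise them as a
  type class: complex vector space with a (physics-convention) inner product,
  linear in the second argument, Hermitian, positive definite, and complete
  with respect to the induced norm.\<close>

class complex_hilbert = ab_group_add +
  fixes scaleC :: "complex \<Rightarrow> 'a \<Rightarrow> 'a" (infixr \<open>*\<^sub>C\<close> 75)
    and cinner :: "'a \<Rightarrow> 'a \<Rightarrow> complex"
  assumes scaleC_add_right: "a *\<^sub>C (x + y) = a *\<^sub>C x + a *\<^sub>C y"
    and scaleC_add_left: "(a + b) *\<^sub>C x = a *\<^sub>C x + b *\<^sub>C x"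
    and scaleC_scaleC: "a *\<^sub>C (b *\<^sub>C x) = (a * b) *\<^sub>C x"
    and scaleC_one: "1 *\<^sub>C x = x"
    and cinner_add_right: "cinner x (y + z) = cinner x y + cinner x z"
    and cinner_scaleC_right: "cinner x (a *\<^sub>C y) = a * cinner x y"
    and cinner_cnj: "cinner y x = cnj (cinner x y)"
    and cinner_pos: "x \<noteq> 0 \<Longrightarrow> Re (cinner x x) > 0"
    and cinner_complete:
      "(\<forall>e>0. \<exists>N::nat. \<forall>m\<ge>N. \<forall>n\<ge>N. sqrt (Re (cinner (X m - X n) (X m - X n))) < e)
       \<Longrightarrow> (\<exists>L. \<forall>e>0. \<exists>N::nat. \<forall>n\<ge>N. sqrt (Re (cinner (X n - L) (X n - L))) < e)"

definition clinear :: "('a::complex_hilbert \<Rightarrow> 'a) \<Rightarrow> bool" where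
  "clinear f \<longleftrightarrow> (\<forall>x y. f (x + y) = f x + f y) \<and> (\<forall>a x. f (a *\<^sub>C x) = a *\<^sub>C f x)"

definition orth_proj :: "('a::complex_hilbert \<Rightarrow> 'a) \<Rightarrow> bool" where
  "orth_proj P \<longleftrightarrow> clinear P \<and> (\<forall>x. P (P x) = P x) \<and>
     (\<forall>x y. cinner (P x) y = cinner x (P y))"

definition blockQ :: "complex \<Rightarrow> complex \<Rightarrow> complex \<Rightarrow> ('a::complex_hilbert \<Rightarrow> 'a)
    \<Rightarrow> 'a \<times> 'a \<times> 'a \<Rightarrow> 'a \<times> 'a \<times> 'a" where
  "blockQ s1 s2 s3 Q = (\<lambda>(a, b, c).
     ((s1*s1) *\<^sub>C Q a + (s1*s2) *\<^sub>C Q b + (s1*s3) *\<^sub>C Q c,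
      (s2*s1) *\<^sub>C Q a + (s2*s2) *\<^sub>C Q b + (s2*s3) *\<^sub>C Q c,
      (s3*s1) *\<^sub>C Q a + (s3*s2) *\<^sub>C Q b + (s3*s3) *\<^sub>C Q c))"

definition blockGamma :: "('a::complex_hilbert \<Rightarrow> 'a) \<Rightarrow> 'a \<times> 'a \<times> 'a \<Rightarrow> 'a \<times> 'a \<times> 'a" where
  "blockGamma \<Gamma> = (\<lambda>(a, b, c). (\<Gamma> a, b, 0))"

definition scaleC3 :: "complex \<Rightarrow> 'a::complex_hilbert \<times> 'a \<times> 'a \<Rightarrow> 'a \<times> 'a \<times> 'a" where
  "scaleC3 t = (\<lambda>(a, b, c). (t *\<^sub>C a, t *\<^sub>C b, t *\<^sub>C c))"

end

theory Submission
  imports Defs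
begin

context complex_hilbert begin
lemma scaleC_zero_right[simp]: "a *\<^sub>C 0 = 0"
  using scaleC_add_right[of a 0 0] by simp
lemma scaleC_zero_left[simp]: "0 *\<^sub>C x = 0"
  using scaleC_add_left[of 0 0 x] by simp
lemma scaleC_diff_right: "a *\<^sub>C (x - y) = a *\<^sub>C x - a *\<^sub>C y"
  using scaleC_add_right[of a "x - y" y] by (simp add: eq_diff_eq)
lemma scaleC_diff_left: "(a - b) *\<^sub>C x = a *\<^sub>C x - b *\<^sub>C x"
  using scaleC_add_left[of "a - b" b x] by (simp add: eq_diff_eq)
end

lemma clinear_0: "clinear f \<Longrightarrow> f 0 = 0"
  unfolding clinear_def by (metis add_cancel_right_right)
lemma clinear_add: "clinear f \<Longrightarrow> f (x + y) = f x + f y"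
  unfolding clinear_def by blast
lemma clinear_scale: "clinear f \<Longrightarrow> f (a *\<^sub>C x) = a *\<^sub>C f x"
  unfolding clinear_def by blast
lemma clinear_diff: "clinear f \<Longrightarrow> f (x - y) = f x - f y"
  using clinear_add[of f "x - y" y] by (simp add: eq_diff_eq)

lemma lin2: "c *\<^sub>C (a *\<^sub>C x + b *\<^sub>C x) = (c * (a + b)) *\<^sub>C (x::'a::complex_hilbert)"
  by (simp add: scaleC_add_left[symmetric] scaleC_scaleC)

lemma partA:
  fixes Q :: "'a::complex_hilbert \<Rightarrow> 'a"
  assumes lQ: "clinear Q" and QQ: "\<forall>x. Q (Q x) = Q x"
    and s1: "s1 \<noteq> 0" and z: "z \<noteq> 0" and w: "s1^2 * z + s2^2 \<noteq> 0"
  shows "E1 - inverse (s1^2 * z + s2^2) *\<^sub>C ((s2*s1) *\<^sub>C Q E + (s2*s2) *\<^sub>C Q E1) = 0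
         \<longleftrightarrow> E1 = (s2 / (s1 * z)) *\<^sub>C Q E"
proof -
  define c where "c = inverse (s1^2 * z + s2^2)"
  define k where "k = s2 / (s1 * z)"
  have k1: "s2*s1 + s2*s2*k = k * (s1^2 * z + s2^2)"
    unfolding k_def using s1 z by (simp add: field_simps power2_eq_square)
  have key: "c * (s2*s1 + s2*s2*k) = k"
    unfolding k1 c_def using w by simp
  have "E1 - c *\<^sub>C ((s2*s1) *\<^sub>C Q E + (s2*s2) *\<^sub>C Q E1) = 0 \<longleftrightarrow> E1 = k *\<^sub>C Q E"
  proof
    assume h: "E1 - c *\<^sub>C ((s2*s1) *\<^sub>C Q E + (s2*s2) *\<^sub>C Q E1) = 0"
    hence e1: "E1 = c *\<^sub>C ((s2*s1) *\<^sub>C Q E + (s2*s2) *\<^sub>C Q E1)" by simp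
    hence "Q E1 = c *\<^sub>C ((s2*s1) *\<^sub>C Q E + (s2*s2) *\<^sub>C Q E1)"
      using lQ QQ by (metis clinear_add clinear_scale)
    hence "Q E1 = (c*(s2*s1)) *\<^sub>C Q E + (c*(s2*s2)) *\<^sub>C Q E1"
      by (simp add: scaleC_add_right scaleC_scaleC)
    hence "Q E1 - (c*(s2*s2)) *\<^sub>C Q E1 = (c*(s2*s1)) *\<^sub>C Q E"
      by (simp add: diff_eq_eq add.commute)
    hence "(1 - c*(s2*s2)) *\<^sub>C Q E1 = (c*(s2*s1)) *\<^sub>C Q E"
      by (simp add: scaleC_diff_left scaleC_one)
    hence "inverse (1 - c*(s2*s2)) *\<^sub>C ((1 - c*(s2*s2)) *\<^sub>C Q E1)
        = inverse (1 - c*(s2*s2)) *\<^sub>C ((c*(s2*s1)) *\<^sub>C Q E)" by simp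
    moreover have d: "1 - c*(s2*s2) = c*(s1^2*z)"
      unfolding c_def using w by (simp add: field_simps power2_eq_square)
    have c0: "c \<noteq> 0" unfolding c_def using w by simp
    have "1 - c*(s2*s2) \<noteq> 0" unfolding d using c0 s1 z by simp
    moreover have "inverse (1 - c*(s2*s2)) * (c*(s2*s1)) = k"
      unfolding d k_def using c0 s1 z by (simp add: field_simps power2_eq_square)
    ultimately have qe1: "Q E1 = k *\<^sub>C Q E" by (simp add: scaleC_scaleC scaleC_one)
    show "E1 = k *\<^sub>C Q E" using e1 qe1 key by (simp add: scaleC_scaleC lin2)
  next
    assume e1: "E1 = k *\<^sub>C Q E"
    hence "Q E1 = k *\<^sub>C Q E" using lQ QQ by (simp add: clinear_scale)
    thus "E1 - c *\<^sub>C ((s2*s1) *\<^sub>C Q E + (s2*s2) *\<^sub>C Q E1) = 0"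
      using e1 key by (simp add: scaleC_scaleC lin2)
  qed
  thus ?thesis unfolding c_def k_def .
qed

lemma partB:
  fixes \<Gamma> Q :: "'a::complex_hilbert \<Rightarrow> 'a"
  assumes lG: "clinear \<Gamma>" and GE: "\<Gamma> E = E"
    and s1: "s1 \<noteq> 0" and z: "z \<noteq> 0" and w: "s1^2 * z + s2^2 \<noteq> 0"
    and qe1: "Q E1 = (s2 / (s1 * z)) *\<^sub>C Q E"
  shows "\<Gamma> (E - inverse (s1^2 * z + s2^2) *\<^sub>C ((s1*s1) *\<^sub>C Q E + (s1*s2) *\<^sub>C Q E1))
         = E - inverse z *\<^sub>C \<Gamma> (Q E)"
proof -
  define c where "c = inverse (s1^2 * z + s2^2)"
  define k where "k = s2 / (s1 * z)"
  have k1: "s1*s1 + s1*s2*k = inverse z * (s1^2 * z + s2^2)"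
    unfolding k_def using s1 z by (simp add: field_simps power2_eq_square)
  have key: "c * (s1*s1 + s1*s2*k) = inverse z"
    unfolding k1 c_def using w by simp
  have "c *\<^sub>C ((s1*s1) *\<^sub>C Q E + (s1*s2) *\<^sub>C Q E1) = inverse z *\<^sub>C Q E"
    using qe1 key unfolding k_def[symmetric] by (simp add: scaleC_scaleC lin2)
  hence "\<Gamma> (E - c *\<^sub>C ((s1*s1) *\<^sub>C Q E + (s1*s2) *\<^sub>C Q E1)) = E - inverse z *\<^sub>C \<Gamma> (Q E)"
    using lG GE by (simp add: clinear_diff clinear_scale)
  thus ?thesis unfolding c_def .
qed

lemma eqv:
  fixes \<Gamma> Q :: "'a::complex_hilbert \<Rightarrow> 'a"
  assumes lQ: "clinear Q"
  shows "blockGamma \<Gamma> ((E, E1, 0) - scaleC3 c (blockQ s1 s2 s3 Q (E, E1, 0))) = (h, 0, 0)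
    \<longleftrightarrow> \<Gamma> (E - c *\<^sub>C ((s1*s1) *\<^sub>C Q E + (s1*s2) *\<^sub>C Q E1)) = h
        \<and> E1 - c *\<^sub>C ((s2*s1) *\<^sub>C Q E + (s2*s2) *\<^sub>C Q E1) = 0"
  using clinear_0[OF lQ] by (simp add: blockGamma_def blockQ_def scaleC3_def)

lemma part1:
  fixes \<Gamma> Q :: "'a::complex_hilbert \<Rightarrow> 'a"
  assumes lG: "clinear \<Gamma>" and lQ: "clinear Q" and QQ: "\<forall>x. Q (Q x) = Q x" and GE: "\<Gamma> E = E"
    and s1: "s1 \<noteq> 0" and z: "z \<noteq> 0" and w: "s1^2 * z + s2^2 \<noteq> 0"
  shows "blockGamma \<Gamma> ((E, E1, 0) - scaleC3 (inverse (s1^2 * z + s2^2)) (blockQ s1 s2 s3 Q (E, E1, 0))) = (h, 0, 0)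
    \<longleftrightarrow> (E - inverse z *\<^sub>C \<Gamma> (Q E) = h \<and> E1 = (s2 / (s1 * z)) *\<^sub>C Q E)"
(is "?lhs \<longleftrightarrow> ?rhs")
proof -
  have A: "E1 - inverse (s1^2 * z + s2^2) *\<^sub>C ((s2*s1) *\<^sub>C Q E + (s2*s2) *\<^sub>C Q E1) = 0
         \<longleftrightarrow> E1 = (s2 / (s1 * z)) *\<^sub>C Q E" by (rule partA[OF lQ QQ s1 z w])
  show ?thesis
  proof
    assume H: ?lhs
    hence e1: "E1 = (s2 / (s1 * z)) *\<^sub>C Q E" using A eqv[OF lQ] by blast
    hence "Q E1 = (s2 / (s1 * z)) *\<^sub>C Q E" using lQ QQ by (simp add: clinear_scale)
    from partB[OF lG GE s1 z w this] H eqv[OF lQ] e1 show "E - inverse z *\<^sub>C \<Gamma> (Q E) = h \<and> E1 = (s2 / (s1 * z)) *\<^sub>C Q E"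
      by metis
  next
    assume H: "E - inverse z *\<^sub>C \<Gamma> (Q E) = h \<and> E1 = (s2 / (s1 * z)) *\<^sub>C Q E"
    hence "Q E1 = (s2 / (s1 * z)) *\<^sub>C Q E" using lQ QQ by (simp add: clinear_scale)
    from partB[OF lG GE s1 z w this] H A eqv[OF lQ] show ?lhs by metis
  qed
qed

theorem mainTheorem11:
  fixes \<Gamma> Q :: "'a::complex_hilbert \<Rightarrow> 'a"
    and s1 s2 s3 z :: complex
    and E h :: 'a
  assumes "orth_proj \<Gamma>" and "orth_proj Q"
    and "s1^2 + s2^2 + s3^2 = 1" and "s1 \<noteq> 0"
    and "z \<noteq> 0" and "s1^2 * z + s2^2 \<noteq> 0"
    and "\<Gamma> E = E" and "\<Gamma> h = h"
  shows "(E - inverse z *\<^sub>C \<Gamma> (Q E) = h \<longleftrightarrow>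
           (\<exists>E1. blockGamma \<Gamma> ((E, E1, 0) - scaleC3 (inverse (s1^2 * z + s2^2))
                     (blockQ s1 s2 s3 Q (E, E1, 0))) = (h, 0, 0)))
      \<and> (\<forall>E1. blockGamma \<Gamma> ((E, E1, 0) - scaleC3 (inverse (s1^2 * z + s2^2))
                     (blockQ s1 s2 s3 Q (E, E1, 0))) = (h, 0, 0)
             \<longrightarrow> E1 = (s2 / (s1 * z)) *\<^sub>C Q E)
      \<and> ((bij_betw (\<lambda>x. x - inverse z *\<^sub>C \<Gamma> (Q x)) (range \<Gamma>) (range \<Gamma>) \<and>
          bij_betw (\<lambda>X. X - scaleC3 (inverse (s1^2 * z + s2^2))
                        (blockGamma \<Gamma> (blockQ s1 s2 s3 Q X)))
                   (range (blockGamma \<Gamma>)) (range (blockGamma \<Gamma>)))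
         \<longrightarrow> inv_into (range \<Gamma>) (\<lambda>x. x - inverse z *\<^sub>C \<Gamma> (Q x)) h
             = fst (inv_into (range (blockGamma \<Gamma>))
                  (\<lambda>X. X - scaleC3 (inverse (s1^2 * z + s2^2))
                        (blockGamma \<Gamma> (blockQ s1 s2 s3 Q X))) (h, 0, 0)))"
proof -
  have lG: "clinear \<Gamma>" and GG: "\<forall>x. \<Gamma> (\<Gamma> x) = \<Gamma> x"
    using assms(1) unfolding orth_proj_def by auto
  have lQ: "clinear Q" and QQ: "\<forall>x. Q (Q x) = Q x"
    using assms(2) unfolding orth_proj_def by auto
  note s1 = assms(4) and z = assms(5) and w = assms(6)
  note P1 = part1[OF lG lQ QQ _ s1 z w, of _ _ s3 h]
  define f where "f = (\<lambda>x. x - inverse z *\<^sub>C \<Gamma> (Q x))"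
  define g where "g = (\<lambda>X. X - scaleC3 (inverse (s1^2 * z + s2^2))
                        (blockGamma \<Gamma> (blockQ s1 s2 s3 Q X)))"
  have c3: "(bij_betw f (range \<Gamma>) (range \<Gamma>) \<and> bij_betw g (range (blockGamma \<Gamma>)) (range (blockGamma \<Gamma>)))
         \<longrightarrow> inv_into (range \<Gamma>) f h = fst (inv_into (range (blockGamma \<Gamma>)) g (h, 0, 0))"
  proof
    assume B: "bij_betw f (range \<Gamma>) (range \<Gamma>) \<and> bij_betw g (range (blockGamma \<Gamma>)) (range (blockGamma \<Gamma>))"
    define x0 where "x0 = inv_into (range \<Gamma>) f h"
    have hr: "h \<in> f ` range \<Gamma>" using B assms(8) unfolding bij_betw_def by (metis rangeI)
    have x0r: "x0 \<in> range \<Gamma>" unfolding x0_def using hr by (simp add: inv_into_into)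
    have fx0: "f x0 = h" unfolding x0_def using hr by (simp add: f_inv_into_f)
    have Gx0: "\<Gamma> x0 = x0" using x0r GG by auto
    define E1 where "E1 = (s2 / (s1 * z)) *\<^sub>C Q x0"
    have L: "blockGamma \<Gamma> ((x0, E1, 0) - scaleC3 (inverse (s1^2 * z + s2^2)) (blockQ s1 s2 s3 Q (x0, E1, 0))) = (h, 0, 0)"
      using P1[OF Gx0, of E1] fx0 unfolding f_def E1_def by simp
    have X0r: "(x0, E1, 0) \<in> range (blockGamma \<Gamma>)"
      using Gx0 unfolding blockGamma_def by (metis (no_types, lifting) case_prod_conv rangeI)
    have "g (x0, E1, 0) = blockGamma \<Gamma> ((x0, E1, 0) - scaleC3 (inverse (s1^2 * z + s2^2)) (blockQ s1 s2 s3 Q (x0, E1, 0)))"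
      unfolding g_def using Gx0 clinear_0[OF lQ]
      by (simp add: blockGamma_def blockQ_def scaleC3_def clinear_diff[OF lG] clinear_scale[OF lG] clinear_add[OF lG])
    hence "g (x0, E1, 0) = (h, 0, 0)" using L by simp
    hence "inv_into (range (blockGamma \<Gamma>)) g (h, 0, 0) = (x0, E1, 0)"
      using B X0r unfolding bij_betw_def by (simp add: inv_into_f_eq)
    thus "inv_into (range \<Gamma>) f h = fst (inv_into (range (blockGamma \<Gamma>)) g (h, 0, 0))"
      unfolding x0_def by simp
  qed
  show ?thesis
    using P1[OF assms(7)] c3 unfolding f_def g_def by blast
qed

end
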